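(* Let $X$ be a real random variable with finite mean $\mathrm{E}X=0$, and let $\{X_j\}_{j\ge1}$ be independent random variables, each distributed as $X$. Let $R_0>0$. For each $i\in\mathbb{N}$, let $a_i\in[-R_0,R_0]$ and $\lambda_i\in\{-1,1\}$ be random variables depending only on $X_1,\dots,X_{i-1}$. For all $t$ define $$Y_t=\frac{1}{t}\sum_{j=1}^t\lambda_jX_j,\qquad Z_t=\frac{1}{t^2}\sum_{i=1}^t a_i\Big(\sum_{j=i}^t\lambda_jX_j\Big)=\frac{1}{t^2}\sum_{j=1}^t\lambda_j\Big(\sum_{i=1}^j a_i\Big)X_j.$$ Then for every $\epsilon>0$, $$\lim_{t\to\infty}\Pr(|Y_t|>\epsilon)=\lim_{t\to\infty}\Pr(|Z_t|>\epsilon)=0.$$ *)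

theory Defs
  imports "HOL-Probability.Probability"
begin

definition past_sigma :: "'a measure \<Rightarrow> (nat \<Rightarrow> 'a \<Rightarrow> real) \<Rightarrow> nat \<Rightarrow> 'a measure" where
  "past_sigma M Xs i =
     sigma (space M) (\<Union>j\<in>{1..<i}. {Xs j -` A \<inter> space M | A. A \<in> sets borel})"

end

theory Submission
  imports Defs
begin

locale L4 = prob_space M for M :: "'a measure" +
  fixes X :: "'a \<Rightarrow> real" and Xs :: "nat \<Rightarrow> 'a \<Rightarrow> real"
  assumes intX: "integrable M X" and EX0: "expectation X = 0"
    and ind: "indep_vars (\<lambda>_. borel) Xs {1..}"
    and dist: "\<And>j. j \<ge> 1 \<Longrightarrow> distr M borel (Xs j) = distr M borel X"
begin

lemma Xs_meas[measurable]: "j \<ge> 1 \<Longrightarrow> Xs j \<in> borel_measurable M"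
  using ind unfolding indep_vars_def by auto

lemma X_meas[measurable]: "X \<in> borel_measurable M"
  using intX by auto

definition "E i = {Xs i -` A \<inter> space M | A. A \<in> sets borel}"

lemma gen_sub: "(\<Union>j\<in>{1..<i}. E j) \<subseteq> Pow (space M)"
  unfolding E_def by auto

lemma gen_ev: "(\<Union>j\<in>{1..<i}. E j) \<subseteq> sets M"
  unfolding E_def by auto

lemma space_past[simp]: "space (past_sigma M Xs i) = space M"
  unfolding past_sigma_def by (simp add: space_measure_of_conv)

lemma sets_past: "sets (past_sigma M Xs i) = sigma_sets (space M) (\<Union>j\<in>{1..<i}. E j)"
  unfolding past_sigma_def E_def[symmetric]
  using gen_sub[of i] unfolding E_def by (simp add: sets_measure_of)

lemma past_mono: "i \<le> j \<Longrightarrow> sets (past_sigma M Xs i) \<subseteq> sets (past_sigma M Xs j)"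
  unfolding sets_past by (rule sigma_sets_mono') (auto, metis atLeastLessThan_iff order_less_le_trans)

lemma past_sub: "sets (past_sigma M Xs i) \<subseteq> sets M"
  unfolding sets_past by (rule sigma_sets_le_sets_iff[THEN iffD2]) (use gen_ev in auto)

lemma subalg: "subalgebra M (past_sigma M Xs i)"
  unfolding subalgebra_def using past_sub by auto

lemma past_meas_M: "f \<in> borel_measurable (past_sigma M Xs i) \<Longrightarrow> f \<in> borel_measurable M"
  by (rule measurable_from_subalg[OF subalg])

lemma past_meas_mono: "i \<le> j \<Longrightarrow> f \<in> borel_measurable (past_sigma M Xs i) \<Longrightarrow> f \<in> borel_measurable (past_sigma M Xs j)"
  unfolding measurable_def using past_mono[of i j] by auto

lemma Xs_past: "1 \<le> i \<Longrightarrow> i < j \<Longrightarrow> Xs i \<in> borel_measurable (past_sigma M Xs j)"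
  unfolding measurable_def sets_past
proof safe
  fix A :: "real set" assume "1 \<le> i" "i < j" "A \<in> sets borel"
  then have "Xs i -` A \<inter> space M \<in> (\<Union>j\<in>{1..<j}. E j)" unfolding E_def by (intro UN_I[of i]) auto
  then show "Xs i -` A \<inter> space (past_sigma M Xs j) \<in> sigma_sets (space M) (\<Union>j\<in>{1..<j}. E j)"
    by auto
qed auto

lemma indep_past: "j \<ge> 1 \<Longrightarrow> F \<in> borel_measurable (past_sigma M Xs j) \<Longrightarrow> indep_var borel F borel (Xs j)"
proof -
  assume j: "j \<ge> 1" and F: "F \<in> borel_measurable (past_sigma M Xs j)"
  let ?I = "\<lambda>b. if b then {1..<j} else {j}"
  have "indep_sets (\<lambda>b. sigma_sets (space M) (\<Union>i\<in>?I b. E i)) UNIV"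
  proof (rule indep_sets_collect_sigma)
    show "indep_sets E (\<Union>b. ?I b)"
      apply (rule indep_sets_mono_index[where I="{1..}"])
      using ind unfolding indep_vars_def2 E_def using j by auto
    show "Int_stable (E i)" for i
      unfolding Int_stable_def E_def
      apply clarify
      subgoal for a b A B by (rule exI[of _ "A \<inter> B"]) auto
      done
    show "disjoint_family_on ?I UNIV"
      unfolding disjoint_family_on_def by auto
  qed
  then show ?thesis
    unfolding indep_var_def indep_vars_def2
  proof (intro conjI ballI)
    show "random_variable (case_bool borel borel i) (case_bool F (Xs j) i)" for i
      using j past_meas_M[OF F] by (cases i) auto
  next
    assume "indep_sets (\<lambda>b. sigma_sets (space M) (\<Union>i\<in>?I b. E i)) UNIV"
    then show "indep_sets (\<lambda>i. {case_bool F (Xs j) i -` A \<inter> space M |A. A \<in> sets (case_bool borel borel i)}) UNIV"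
    proof (rule indep_sets_mono_sets)
      fix b :: bool
      show "{case_bool F (Xs j) b -` A \<inter> space M |A. A \<in> sets (case_bool borel borel b)} \<subseteq> sigma_sets (space M) (\<Union>i\<in>?I b. E i)"
      proof (cases b)
        case True
        have "F -` A \<inter> space M \<in> sets (past_sigma M Xs j)" if "A \<in> sets borel" for A
          using measurable_sets[OF F that] by simp
        then show ?thesis using True by (auto simp: sets_past)
      next
        case False
        then show ?thesis unfolding E_def by auto
      qed
    qed
  qed
qed

lemma int_bdd: "(f::'a\<Rightarrow>real) \<in> borel_measurable M \<Longrightarrow> (\<And>\<omega>. \<omega> \<in> space M \<Longrightarrow> \<bar>f \<omega>\<bar> \<le> B) \<Longrightarrow> integrable M f"
  by (rule integrable_const_bound[where B=B]) auto

lemma dist_int: "j \<ge> 1 \<Longrightarrow> (g::real\<Rightarrow>real) \<in> borel_measurable borel \<Longrightarrow> expectation (\<lambda>\<omega>. g (Xs j \<omega>)) = expectation (\<lambda>\<omega>. g (X \<omega>))"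
  using integral_distr[of "Xs j" M borel g] integral_distr[of X M borel g] dist[of j] by simp

lemma indep_prod:
  fixes F :: "'a \<Rightarrow> real" and g :: "real \<Rightarrow> real"
  assumes j: "j \<ge> 1" and F: "F \<in> borel_measurable (past_sigma M Xs j)" and Fb: "\<And>\<omega>. \<omega> \<in> space M \<Longrightarrow> \<bar>F \<omega>\<bar> \<le> B"
    and g: "g \<in> borel_measurable borel" and gb: "\<And>x. \<bar>g x\<bar> \<le> D"
  shows "expectation (\<lambda>\<omega>. F \<omega> * g (Xs j \<omega>)) = expectation F * expectation (\<lambda>\<omega>. g (X \<omega>))"
proof -
  have FM: "F \<in> borel_measurable M" using past_meas_M[OF F] .
  have "indep_var borel ((\<lambda>x. x) \<circ> F) borel (g \<circ> Xs j)"
    using indep_var_compose[OF indep_past[OF j F], of "\<lambda>x. x" borel g borel] g by simp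
  then have iv: "indep_var borel F borel (\<lambda>\<omega>. g (Xs j \<omega>))" by (simp add: comp_def)
  have "expectation (\<lambda>\<omega>. F \<omega> * g (Xs j \<omega>)) = expectation F * expectation (\<lambda>\<omega>. g (Xs j \<omega>))"
    by (rule indep_var_lebesgue_integral[OF iv]) (auto intro!: int_bdd FM Fb gb measurable_compose[OF Xs_meas[OF j] g])
  then show ?thesis using dist_int[OF j g] by simp
qed

end

definition tr :: "real \<Rightarrow> real \<Rightarrow> real" where "tr K x = (if \<bar>x\<bar> \<le> K then x else 0)"

lemma tr_meas[measurable]: "tr K \<in> borel_measurable borel"
  unfolding tr_def by measurable

lemma tr_bound: "K \<ge> 0 \<Longrightarrow> \<bar>tr K x\<bar> \<le> K"
  unfolding tr_def by auto

context L4 begin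

definition "mK K = expectation (\<lambda>\<omega>. tr K (X \<omega>))"
definition "eta K = expectation (\<lambda>\<omega>. \<bar>X \<omega> - tr K (X \<omega>)\<bar>)"
definition "U K j \<omega> = tr K (Xs j \<omega>) - mK K"

lemma int_tr: "K \<ge> 0 \<Longrightarrow> integrable M (\<lambda>\<omega>. tr K (X \<omega>))"
  by (rule int_bdd[where B=K]) (auto simp: tr_bound)

lemma mK_bound: assumes "K \<ge> 0" shows "\<bar>mK K\<bar> \<le> eta K"
proof -
  have "mK K = - expectation (\<lambda>\<omega>. X \<omega> - tr K (X \<omega>))"
    using EX0 int_tr[OF assms] intX unfolding mK_def by (simp add: Bochner_Integration.integral_diff)
  then have "\<bar>mK K\<bar> = norm (expectation (\<lambda>\<omega>. X \<omega> - tr K (X \<omega>)))" by simp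
  also have "\<dots> \<le> expectation (\<lambda>\<omega>. norm (X \<omega> - tr K (X \<omega>)))"
    by (rule integral_norm_bound)
  finally show ?thesis unfolding eta_def by simp
qed

lemma mK_le: "K \<ge> 0 \<Longrightarrow> \<bar>mK K\<bar> \<le> K"
proof -
  assume K: "K \<ge> 0"
  have "\<bar>mK K\<bar> = norm (expectation (\<lambda>\<omega>. tr K (X \<omega>)))" unfolding mK_def by simp
  also have "\<dots> \<le> expectation (\<lambda>\<omega>. norm (tr K (X \<omega>)))" by (rule integral_norm_bound)
  also have "\<dots> \<le> expectation (\<lambda>\<omega>. K)"
    using K by (intro integral_mono int_bdd[where B=K]) (auto simp: tr_bound)
  finally show ?thesis by (simp add: prob_space)
qed

lemma U_bound: "K \<ge> 0 \<Longrightarrow> \<bar>U K j \<omega>\<bar> \<le> 2 * K"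
  unfolding U_def using tr_bound[of K "Xs j \<omega>"] mK_le[of K] by linarith

lemma g_bound: "K \<ge> 0 \<Longrightarrow> \<bar>tr K x - mK K\<bar> \<le> 2 * K"
  using tr_bound[of K x] mK_le[of K] by linarith

lemma U_meas[measurable]: "j \<ge> 1 \<Longrightarrow> U K j \<in> borel_measurable M"
  unfolding U_def by measurable

lemma U_past: "1 \<le> i \<Longrightarrow> i < j \<Longrightarrow> U K i \<in> borel_measurable (past_sigma M Xs j)"
  unfolding U_def by (intro borel_measurable_diff measurable_compose[OF Xs_past tr_meas]) auto

lemma EgX0: "K \<ge> 0 \<Longrightarrow> expectation (\<lambda>\<omega>. tr K (X \<omega>) - mK K) = 0"
  using int_tr[of K] unfolding mK_def by (simp add: prob_space)

lemma sum_bdd: "(\<And>j. 1 \<le> j \<Longrightarrow> j \<le> n \<Longrightarrow> \<bar>f j\<bar> \<le> B) \<Longrightarrow> \<bar>\<Sum>j=1..n. (f j::real)\<bar> \<le> real n * B"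
proof -
  assume h: "\<And>j. 1 \<le> j \<Longrightarrow> j \<le> n \<Longrightarrow> \<bar>f j\<bar> \<le> B"
  have "\<bar>\<Sum>j=1..n. f j\<bar> \<le> (\<Sum>j=1..n. \<bar>f j\<bar>)" by (rule sum_abs)
  also have "\<dots> \<le> of_nat (card {1..n}) * B" by (rule sum_bounded_above) (use h in auto)
  finally show ?thesis by simp
qed

lemma sq_le: "\<bar>x::real\<bar> \<le> B \<Longrightarrow> x\<^sup>2 \<le> B\<^sup>2"
  by (metis abs_ge_zero power2_abs power_mono)

lemma sq_bound:
  assumes K: "K \<ge> 0" and C: "C \<ge> 0"
    and cm: "\<And>j. 1 \<le> j \<Longrightarrow> j \<le> n \<Longrightarrow> c j \<in> borel_measurable (past_sigma M Xs j)"
    and cb: "\<And>j \<omega>. 1 \<le> j \<Longrightarrow> j \<le> n \<Longrightarrow> \<omega> \<in> space M \<Longrightarrow> \<bar>c j \<omega>\<bar> \<le> C"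
  shows "expectation (\<lambda>\<omega>. (\<Sum>j=1..n. c j \<omega> * U K j \<omega>)\<^sup>2) \<le> real n * (C * (2*K))\<^sup>2"
  using cm cb
proof (induction n)
  case 0 then show ?case by simp
next
  case (Suc n)
  define S where "S \<omega> = (\<Sum>j=1..n. c j \<omega> * U K j \<omega>)" for \<omega>
  define B where "B = C * (2*K)"
  have B0: "B \<ge> 0" using K C unfolding B_def by simp
  have Sm: "S \<in> borel_measurable (past_sigma M Xs (Suc n))"
    unfolding S_def
    by (intro borel_measurable_sum borel_measurable_times past_meas_mono[OF _ Suc.prems(1)] U_past) auto
  have SmM: "S \<in> borel_measurable M" by (rule past_meas_M[OF Sm])
  have cbj: "\<bar>c j \<omega> * U K j \<omega>\<bar> \<le> B" if "1 \<le> j" "j \<le> Suc n" "\<omega> \<in> space M" for j \<omega>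
    unfolding B_def abs_mult using Suc.prems(2)[OF that] U_bound[OF K, of j \<omega>] C
    by (intro mult_mono) auto
  have Sb: "\<bar>S \<omega>\<bar> \<le> real n * B" if "\<omega> \<in> space M" for \<omega>
    unfolding S_def by (rule sum_bdd) (use cbj that in auto)
  have cm1: "c (Suc n) \<in> borel_measurable (past_sigma M Xs (Suc n))" using Suc.prems(1) by auto
  have cM: "c (Suc n) \<in> borel_measurable M" by (rule past_meas_M[OF cm1])
  have cb1: "\<bar>c (Suc n) \<omega>\<bar> \<le> C" if "\<omega> \<in> space M" for \<omega> using Suc.prems(2) that by auto
  have Scb: "\<bar>S \<omega> * c (Suc n) \<omega>\<bar> \<le> real n * B * C" if "\<omega> \<in> space M" for \<omega>
    unfolding abs_mult using Sb[OF that] cb1[OF that] B0 C by (intro mult_mono) auto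
  let ?g = "\<lambda>x. tr K x - mK K"
  have eq: "(\<Sum>j=1..Suc n. c j \<omega> * U K j \<omega>)\<^sup>2 = (S \<omega>)\<^sup>2 + 2 * ((S \<omega> * c (Suc n) \<omega>) * ?g (Xs (Suc n) \<omega>)) + (c (Suc n) \<omega> * U K (Suc n) \<omega>)\<^sup>2" for \<omega>
    by (simp add: S_def U_def power2_eq_square algebra_simps)
  have i1: "integrable M (\<lambda>\<omega>. (S \<omega>)\<^sup>2)"
    proof (rule int_bdd[where B="(real n * B)^2"])
    fix \<omega> assume "\<omega> \<in> space M"
    then have "\<bar>S \<omega>\<bar> \<le> real n * B" by (rule Sb)
    then have "\<bar>S \<omega>\<bar>^2 \<le> (real n * B)^2" by (rule power_mono) simp
    then show "\<bar>(S \<omega>)\<^sup>2\<bar> \<le> (real n * B)^2" by simp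
  qed (use SmM in auto)
  have i2: "integrable M (\<lambda>\<omega>. (S \<omega> * c (Suc n) \<omega>) * ?g (Xs (Suc n) \<omega>))"
  proof (rule int_bdd[where B="real n * B * C * (2*K)"])
    fix \<omega> assume w: "\<omega> \<in> space M"
    have "\<bar>S \<omega> * c (Suc n) \<omega> * ?g (Xs (Suc n) \<omega>)\<bar> = \<bar>S \<omega> * c (Suc n) \<omega>\<bar> * \<bar>?g (Xs (Suc n) \<omega>)\<bar>"
      by (simp add: abs_mult)
    also have "\<dots> \<le> real n * B * C * (2*K)"
      using Scb[OF w] U_bound[OF K, of "Suc n" \<omega>] B0 C by (intro mult_mono) (auto simp: U_def)
    finally show "\<bar>S \<omega> * c (Suc n) \<omega> * ?g (Xs (Suc n) \<omega>)\<bar> \<le> real n * B * C * (2*K)" .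
  qed (use SmM cM in auto)
  have i3: "integrable M (\<lambda>\<omega>. (c (Suc n) \<omega> * U K (Suc n) \<omega>)\<^sup>2)"
    by (rule int_bdd[where B="B^2"]) (use cM cbj in \<open>auto intro!: sq_le\<close>)
  have z: "expectation (\<lambda>\<omega>. (S \<omega> * c (Suc n) \<omega>) * ?g (Xs (Suc n) \<omega>)) = 0"
    using indep_prod[of "Suc n" "\<lambda>\<omega>. S \<omega> * c (Suc n) \<omega>" "real n * B * C" ?g "2*K"] Sm cm1 Scb
      g_bound[OF K] EgX0[OF K] by (auto simp: U_def)
  have b3: "expectation (\<lambda>\<omega>. (c (Suc n) \<omega> * U K (Suc n) \<omega>)\<^sup>2) \<le> expectation (\<lambda>\<omega>. B^2)"
    by (rule integral_mono[OF i3]) (use cbj in \<open>auto intro!: sq_le\<close>)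
  have IH: "expectation (\<lambda>\<omega>. (S \<omega>)\<^sup>2) \<le> real n * B\<^sup>2"
    unfolding S_def B_def using Suc.prems by (intro Suc.IH) auto
  have "expectation (\<lambda>\<omega>. (\<Sum>j=1..Suc n. c j \<omega> * U K j \<omega>)\<^sup>2) =
      expectation (\<lambda>\<omega>. (S \<omega>)\<^sup>2) + 2 * expectation (\<lambda>\<omega>. (S \<omega> * c (Suc n) \<omega>) * ?g (Xs (Suc n) \<omega>))
      + expectation (\<lambda>\<omega>. (c (Suc n) \<omega> * U K (Suc n) \<omega>)\<^sup>2)"
    unfolding eq using i1 i2 i3 by simp
  also have "\<dots> \<le> real n * B\<^sup>2 + B\<^sup>2" using IH z b3 by (simp add: prob_space)
  finally show ?case unfolding B_def by (simp add: algebra_simps)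
qed

end

context L4 begin
lemma int_Xs: assumes j: "j \<ge> 1" shows "integrable M (Xs j)"
proof -
  have "integrable (distr M borel X) (\<lambda>y::real. y)"
    by (subst integrable_distr_eq) (auto simp: intX)
  then have "integrable (distr M borel (Xs j)) (\<lambda>y::real. y)" using dist[OF j] by metis
  then show ?thesis
    by (subst (asm) integrable_distr_eq) (auto simp: Xs_meas[OF j])
qed

definition "V K j \<omega> = Xs j \<omega> - tr K (Xs j \<omega>) + mK K"

lemma V_meas[measurable]: "j \<ge> 1 \<Longrightarrow> V K j \<in> borel_measurable M"
  unfolding V_def by measurable

lemma int_V: "j \<ge> 1 \<Longrightarrow> K \<ge> 0 \<Longrightarrow> integrable M (V K j)"
  unfolding V_def
  by (intro Bochner_Integration.integrable_add Bochner_Integration.integrable_diff int_Xs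
        int_bdd[where B=K] measurable_compose[OF Xs_meas tr_meas]) (auto simp: tr_bound mK_le)

lemma eta_nonneg: "eta K \<ge> 0" unfolding eta_def by simp

lemma EV: assumes j: "j \<ge> 1" and K: "K \<ge> 0" shows "expectation (\<lambda>\<omega>. \<bar>V K j \<omega>\<bar>) \<le> 2 * eta K"
proof -
  have i1: "integrable M (\<lambda>\<omega>. \<bar>Xs j \<omega> - tr K (Xs j \<omega>)\<bar>)"
    by (intro integrable_abs Bochner_Integration.integrable_diff int_Xs[OF j]
        int_bdd[where B=K] measurable_compose[OF Xs_meas[OF j] tr_meas]) (auto simp: tr_bound K)
  have "expectation (\<lambda>\<omega>. \<bar>V K j \<omega>\<bar>) \<le> expectation (\<lambda>\<omega>. \<bar>Xs j \<omega> - tr K (Xs j \<omega>)\<bar> + \<bar>mK K\<bar>)"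
  proof (rule integral_mono)
    show "integrable M (\<lambda>\<omega>. \<bar>V K j \<omega>\<bar>)" using int_V[OF j K] by simp
    show "integrable M (\<lambda>\<omega>. \<bar>Xs j \<omega> - tr K (Xs j \<omega>)\<bar> + \<bar>mK K\<bar>)" using i1 by simp
    show "\<bar>V K j \<omega>\<bar> \<le> \<bar>Xs j \<omega> - tr K (Xs j \<omega>)\<bar> + \<bar>mK K\<bar>" for \<omega>
      unfolding V_def by (rule abs_triangle_ineq)
  qed
  also have "\<dots> = expectation (\<lambda>\<omega>. \<bar>Xs j \<omega> - tr K (Xs j \<omega>)\<bar>) + \<bar>mK K\<bar>"
    using i1 by (simp add: prob_space)
  also have "expectation (\<lambda>\<omega>. \<bar>Xs j \<omega> - tr K (Xs j \<omega>)\<bar>) = eta K"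
    unfolding eta_def by (rule dist_int[OF j, of "\<lambda>x. \<bar>x - tr K x\<bar>"]) measurable
  finally show ?thesis using mK_bound[OF K] by simp
qed

end

context L4 begin

lemma prob_bound:
  fixes c :: "nat \<Rightarrow> 'a \<Rightarrow> real"
  assumes K: "K \<ge> 0" and C: "C \<ge> 0" and e: "\<epsilon> > 0" and t: "t \<ge> 1"
    and cm: "\<And>j. 1 \<le> j \<Longrightarrow> j \<le> t \<Longrightarrow> c j \<in> borel_measurable (past_sigma M Xs j)"
    and cb: "\<And>j \<omega>. 1 \<le> j \<Longrightarrow> j \<le> t \<Longrightarrow> \<omega> \<in> space M \<Longrightarrow> \<bar>c j \<omega>\<bar> \<le> C"
  shows "measure M {\<omega> \<in> space M. \<bar>(1 / real t) * (\<Sum>j=1..t. c j \<omega> * Xs j \<omega>)\<bar> > \<epsilon>}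
         \<le> 4 * C * eta K / \<epsilon> + 16 * C\<^sup>2 * K\<^sup>2 / (real t * \<epsilon>\<^sup>2)"
proof -
  define SU where "SU \<omega> = (\<Sum>j=1..t. c j \<omega> * U K j \<omega>)" for \<omega>
  define SV where "SV \<omega> = (\<Sum>j=1..t. c j \<omega> * V K j \<omega>)" for \<omega>
  define a where "a = real t * \<epsilon> / 2"
  have a0: "a > 0" using t e unfolding a_def by simp
  have cM: "c j \<in> borel_measurable M" if "1 \<le> j" "j \<le> t" for j
    using past_meas_M[OF cm[OF that]] .
  have SUm[measurable]: "SU \<in> borel_measurable M"
    unfolding SU_def by (intro borel_measurable_sum borel_measurable_times cM U_meas) auto
  have SVm[measurable]: "SV \<in> borel_measurable M"
    unfolding SV_def by (intro borel_measurable_sum borel_measurable_times cM V_meas) auto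
  have split: "c j \<omega> * Xs j \<omega> = c j \<omega> * U K j \<omega> + c j \<omega> * V K j \<omega>" for j \<omega>
    unfolding U_def V_def by (simp add: algebra_simps)
  have sumeq: "(\<Sum>j=1..t. c j \<omega> * Xs j \<omega>) = SU \<omega> + SV \<omega>" for \<omega>
    unfolding SU_def SV_def split by (simp add: sum.distrib)
  have iSV: "integrable M SV"
    unfolding SV_def
  proof (intro Bochner_Integration.integrable_sum)
    fix j assume j: "j \<in> {1..t}"
    show "integrable M (\<lambda>\<omega>. c j \<omega> * V K j \<omega>)"
    proof (rule Bochner_Integration.integrable_bound[where f="\<lambda>\<omega>. C * \<bar>V K j \<omega>\<bar>"])
      show "integrable M (\<lambda>\<omega>. C * \<bar>V K j \<omega>\<bar>)" using int_V[of j K] j K by auto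
      show "(\<lambda>\<omega>. c j \<omega> * V K j \<omega>) \<in> borel_measurable M" using cM j V_meas[of j K] by auto
      show "AE \<omega> in M. norm (c j \<omega> * V K j \<omega>) \<le> norm (C * \<bar>V K j \<omega>\<bar>)"
        using cb j C by (auto simp: abs_mult intro!: mult_right_mono)
    qed
  qed
  let ?A = "{\<omega> \<in> space M. \<bar>(1 / real t) * (\<Sum>j=1..t. c j \<omega> * Xs j \<omega>)\<bar> > \<epsilon>}"
  let ?A1 = "{\<omega> \<in> space M. (SU \<omega>)\<^sup>2 \<ge> a\<^sup>2}"
  let ?A2 = "{\<omega> \<in> space M. \<bar>SV \<omega>\<bar> \<ge> a}"
  have sub: "?A \<subseteq> ?A1 \<union> ?A2"
  proof
    fix \<omega> assume w: "\<omega> \<in> ?A"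
    then have "\<bar>SU \<omega> + SV \<omega>\<bar> / real t > \<epsilon>" unfolding sumeq by (simp add: abs_divide)
    then have big: "\<bar>SU \<omega> + SV \<omega>\<bar> > 2 * a" using t unfolding a_def by (simp add: field_simps)
    show "\<omega> \<in> ?A1 \<union> ?A2"
    proof (cases "\<bar>SU \<omega>\<bar> \<ge> a")
      case True
      then have "a\<^sup>2 \<le> (SU \<omega>)\<^sup>2" using a0 by (metis abs_of_pos sq_le abs_le_square_iff)
      then show ?thesis using w by auto
    next
      case False
      then have "\<bar>SV \<omega>\<bar> \<ge> a" using big by linarith
      then show ?thesis using w by auto
    qed
  qed
  have "measure M ?A \<le> measure M (?A1 \<union> ?A2)"
    by (rule finite_measure_mono[OF sub]) measurable
  also have "\<dots> \<le> measure M ?A1 + measure M ?A2"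
    by (rule measure_Un_le) measurable
  finally have m12: "measure M ?A \<le> measure M ?A1 + measure M ?A2" .
  have m1: "measure M ?A1 \<le> expectation (\<lambda>\<omega>. (SU \<omega>)\<^sup>2) / a\<^sup>2"
  proof (rule integral_Markov_inequality_measure[where A="space M"])
    show "integrable M (\<lambda>\<omega>. (SU \<omega>)\<^sup>2)"
    proof (rule int_bdd[where B="(real t * (C * (2*K)))\<^sup>2"])
      fix \<omega> assume w: "\<omega> \<in> space M"
      have "\<bar>SU \<omega>\<bar> \<le> real t * (C * (2*K))"
        unfolding SU_def
      proof (rule sum_bdd)
        fix j assume "1 \<le> j" "j \<le> t"
        then show "\<bar>c j \<omega> * U K j \<omega>\<bar> \<le> C * (2*K)"
          unfolding abs_mult using cb w U_bound[OF K] C by (intro mult_mono) auto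
      qed
      then show "\<bar>(SU \<omega>)\<^sup>2\<bar> \<le> (real t * (C * (2*K)))\<^sup>2" by (simp add: sq_le)
    qed simp
  qed (use a0 in auto)
  have e1: "expectation (\<lambda>\<omega>. (SU \<omega>)\<^sup>2) \<le> real t * (C * (2*K))\<^sup>2"
    unfolding SU_def by (rule sq_bound[OF K C cm cb]) auto
  have m2: "measure M ?A2 \<le> expectation (\<lambda>\<omega>. \<bar>SV \<omega>\<bar>) / a"
    by (rule integral_Markov_inequality_measure[where A="space M"])
       (use a0 iSV in auto)
  have e2: "expectation (\<lambda>\<omega>. \<bar>SV \<omega>\<bar>) \<le> real t * (C * (2 * eta K))"
  proof -
    have "expectation (\<lambda>\<omega>. \<bar>SV \<omega>\<bar>) \<le> expectation (\<lambda>\<omega>. \<Sum>j=1..t. C * \<bar>V K j \<omega>\<bar>)"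
    proof (rule integral_mono)
      show "integrable M (\<lambda>\<omega>. \<bar>SV \<omega>\<bar>)" using iSV by simp
      show "integrable M (\<lambda>\<omega>. \<Sum>j=1..t. C * \<bar>V K j \<omega>\<bar>)"
        using int_V K by (intro Bochner_Integration.integrable_sum integrable_mult_right integrable_abs) auto
      fix \<omega> assume w: "\<omega> \<in> space M"
      have "\<bar>SV \<omega>\<bar> \<le> (\<Sum>j=1..t. \<bar>c j \<omega> * V K j \<omega>\<bar>)" unfolding SV_def by (rule sum_abs)
      also have "\<dots> \<le> (\<Sum>j=1..t. C * \<bar>V K j \<omega>\<bar>)"
        by (rule sum_mono) (use cb w in \<open>auto simp: abs_mult intro!: mult_right_mono\<close>)
      finally show "\<bar>SV \<omega>\<bar> \<le> (\<Sum>j=1..t. C * \<bar>V K j \<omega>\<bar>)" .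
    qed
    also have "\<dots> = (\<Sum>j=1..t. C * expectation (\<lambda>\<omega>. \<bar>V K j \<omega>\<bar>))"
    proof -
      have "expectation (\<lambda>\<omega>. \<Sum>j=1..t. C * \<bar>V K j \<omega>\<bar>) = (\<Sum>j=1..t. expectation (\<lambda>\<omega>. C * \<bar>V K j \<omega>\<bar>))"
        by (rule Bochner_Integration.integral_sum) (use int_V K in auto)
      then show ?thesis by simp
    qed
    also have "\<dots> \<le> (\<Sum>j=1..t. C * (2 * eta K))"
      by (rule sum_mono) (use EV K C in \<open>auto intro!: mult_left_mono\<close>)
    finally show ?thesis by simp
  qed
  have "measure M ?A \<le> real t * (C * (2 * K))\<^sup>2 / a\<^sup>2 + real t * (C * (2 * eta K)) / a"
  proof -
    have "expectation (\<lambda>\<omega>. (SU \<omega>)\<^sup>2) / a\<^sup>2 \<le> real t * (C * (2 * K))\<^sup>2 / a\<^sup>2"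
      using e1 a0 by (intro divide_right_mono) auto
    moreover have "expectation (\<lambda>\<omega>. \<bar>SV \<omega>\<bar>) / a \<le> real t * (C * (2 * eta K)) / a"
      using e2 a0 by (intro divide_right_mono) auto
    ultimately show ?thesis using m12 m1 m2 by linarith
  qed
  also have "\<dots> = 4 * C * eta K / \<epsilon> + 16 * C\<^sup>2 * K\<^sup>2 / (real t * \<epsilon>\<^sup>2)"
    unfolding a_def using t e by (simp add: field_simps power2_eq_square)
  finally show ?thesis .
qed
end

context L4 begin

lemma eta_lim: "(\<lambda>n::nat. eta (real n)) \<longlonglongrightarrow> 0"
proof -
  have "(\<lambda>n. integral\<^sup>L M (\<lambda>\<omega>. \<bar>X \<omega> - tr (real n) (X \<omega>)\<bar>)) \<longlonglongrightarrow> integral\<^sup>L M (\<lambda>\<omega>. 0::real)"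
  proof (rule integral_dominated_convergence[where w="\<lambda>\<omega>. \<bar>X \<omega>\<bar>"])
    show "integrable M (\<lambda>\<omega>. \<bar>X \<omega>\<bar>)" using intX by simp
    show "AE \<omega> in M. (\<lambda>n. \<bar>X \<omega> - tr (real n) (X \<omega>)\<bar>) \<longlonglongrightarrow> 0"
    proof (rule AE_I2)
      fix \<omega>
      obtain N :: nat where "\<bar>X \<omega>\<bar> \<le> real N" using real_arch_simple by blast
      then have "\<forall>n\<ge>N. \<bar>X \<omega> - tr (real n) (X \<omega>)\<bar> = 0"
        unfolding tr_def by auto
      then show "(\<lambda>n. \<bar>X \<omega> - tr (real n) (X \<omega>)\<bar>) \<longlonglongrightarrow> 0"
        by (intro tendsto_eventually) (auto simp: eventually_sequentially)
    qed
    show "AE \<omega> in M. norm \<bar>X \<omega> - tr (real n) (X \<omega>)\<bar> \<le> \<bar>X \<omega>\<bar>" for n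
      unfolding tr_def by auto
  qed auto
  then show ?thesis unfolding eta_def by simp
qed

lemma main_lim:
  fixes c :: "nat \<Rightarrow> nat \<Rightarrow> 'a \<Rightarrow> real"
  assumes C: "C > 0" and e: "\<epsilon> > 0"
    and cm: "\<And>t j. 1 \<le> j \<Longrightarrow> j \<le> t \<Longrightarrow> c t j \<in> borel_measurable (past_sigma M Xs j)"
    and cb: "\<And>t j \<omega>. 1 \<le> j \<Longrightarrow> j \<le> t \<Longrightarrow> \<omega> \<in> space M \<Longrightarrow> \<bar>c t j \<omega>\<bar> \<le> C"
  shows "(\<lambda>t. measure M {\<omega> \<in> space M. \<bar>(1 / real t) * (\<Sum>j=1..t. c t j \<omega> * Xs j \<omega>)\<bar> > \<epsilon>}) \<longlonglongrightarrow> 0"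
proof (rule LIMSEQ_I)
  fix r :: real assume r: "r > 0"
  have "r * \<epsilon> / (8 * C) > 0" using r e C by simp
  from LIMSEQ_D[OF eta_lim this] obtain N0 where "\<forall>n\<ge>N0. norm (eta (real n) - 0) < r * \<epsilon> / (8 * C)" by blast
  then have etaN: "eta (real N0) < r * \<epsilon> / (8 * C)" by auto
  define K where "K = real N0"
  have K: "K \<ge> 0" unfolding K_def by simp
  obtain N1 :: nat where N1: "32 * C\<^sup>2 * K\<^sup>2 / (r * \<epsilon>\<^sup>2) < real N1" using reals_Archimedean2 by blast
  show "\<exists>no. \<forall>n\<ge>no. norm (measure M {\<omega> \<in> space M. \<bar>(1 / real n) * (\<Sum>j=1..n. c n j \<omega> * Xs j \<omega>)\<bar> > \<epsilon>} - 0) < r"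
  proof (intro exI allI impI)
    fix n assume n: "max 1 N1 \<le> n"
    then have n1: "n \<ge> 1" and nN: "real N1 \<le> real n" by auto
    have pb: "measure M {\<omega> \<in> space M. \<bar>(1 / real n) * (\<Sum>j=1..n. c n j \<omega> * Xs j \<omega>)\<bar> > \<epsilon>}
         \<le> 4 * C * eta K / \<epsilon> + 16 * C\<^sup>2 * K\<^sup>2 / (real n * \<epsilon>\<^sup>2)"
      by (rule prob_bound[OF K less_imp_le[OF C] e n1]) (use cm cb in auto)
    have t1: "4 * C * eta K / \<epsilon> < r / 2"
      using etaN C e unfolding K_def by (simp add: field_simps)
    have "32 * C\<^sup>2 * K\<^sup>2 / (r * \<epsilon>\<^sup>2) < real n" using N1 nN by linarith
    then have t2: "16 * C\<^sup>2 * K\<^sup>2 / (real n * \<epsilon>\<^sup>2) < r / 2"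
      using r e n1 by (simp add: field_simps)
    show "norm (measure M {\<omega> \<in> space M. \<bar>(1 / real n) * (\<Sum>j=1..n. c n j \<omega> * Xs j \<omega>)\<bar> > \<epsilon>} - 0) < r"
      using pb t1 t2 by simp
  qed
qed

end

lemma swap_sum: "(\<Sum>i=1..(t::nat). (f i::real) * (\<Sum>j=i..t. g j)) = (\<Sum>j=1..t. g j * (\<Sum>i=1..j. f i))"
proof (induction t)
  case 0 then show ?case by simp
next
  case (Suc t)
  have "(\<Sum>i=1..Suc t. f i * (\<Sum>j=i..Suc t. g j)) = (\<Sum>i=1..t. f i * (\<Sum>j=i..Suc t. g j)) + f (Suc t) * g (Suc t)"
    by simp
  also have "(\<Sum>i=1..t. f i * (\<Sum>j=i..Suc t. g j)) = (\<Sum>i=1..t. f i * (\<Sum>j=i..t. g j)) + (\<Sum>i=1..t. f i) * g (Suc t)"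
    by (simp add: sum_distrib_right distrib_left sum.distrib)
  finally show ?case using Suc by (simp add: algebra_simps)
qed

theorem lemma4:
  fixes M :: "'a measure" and X :: "'a \<Rightarrow> real" and Xs :: "nat \<Rightarrow> 'a \<Rightarrow> real"
    and a lam :: "nat \<Rightarrow> 'a \<Rightarrow> real" and R0 :: real and \<epsilon> :: real
  assumes "prob_space M"
    and "integrable M X" and "prob_space.expectation M X = 0"
    and "prob_space.indep_vars M (\<lambda>_. borel) Xs {1..}"
    and "\<And>j. j \<ge> 1 \<Longrightarrow> distr M borel (Xs j) = distr M borel X"
    and "R0 > 0"
    and "\<And>i. i \<ge> 1 \<Longrightarrow> a i \<in> borel_measurable (past_sigma M Xs i)"
    and "\<And>i. i \<ge> 1 \<Longrightarrow> lam i \<in> borel_measurable (past_sigma M Xs i)"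
    and "\<And>i \<omega>. i \<ge> 1 \<Longrightarrow> \<omega> \<in> space M \<Longrightarrow> a i \<omega> \<in> {-R0..R0}"
    and "\<And>i \<omega>. i \<ge> 1 \<Longrightarrow> \<omega> \<in> space M \<Longrightarrow> lam i \<omega> \<in> {-1, 1}"
    and "\<epsilon> > 0"
  shows "((\<lambda>t::nat. measure M {\<omega> \<in> space M.
             \<bar>(1 / real t) * (\<Sum>j=1..t. lam j \<omega> * Xs j \<omega>)\<bar> > \<epsilon>}) \<longlongrightarrow> 0) sequentially
       \<and> ((\<lambda>t::nat. measure M {\<omega> \<in> space M.
             \<bar>(1 / (real t)\<^sup>2) * (\<Sum>i=1..t. a i \<omega> * (\<Sum>j=i..t. lam j \<omega> * Xs j \<omega>))\<bar> > \<epsilon>})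
           \<longlongrightarrow> 0) sequentially"
proof -
  interpret L4 M X Xs
    by (rule L4.intro[OF assms(1)], unfold_locales) (use assms in auto)
  have lamb: "\<bar>lam i \<omega>\<bar> = 1" if "i \<ge> 1" "\<omega> \<in> space M" for i \<omega>
    using assms(10)[OF that] by auto
  have ab: "\<bar>a i \<omega>\<bar> \<le> R0" if "i \<ge> 1" "\<omega> \<in> space M" for i \<omega>
    using assms(9)[OF that] by auto
  have P1: "(\<lambda>t::nat. measure M {\<omega> \<in> space M.
             \<bar>(1 / real t) * (\<Sum>j=1..t. lam j \<omega> * Xs j \<omega>)\<bar> > \<epsilon>}) \<longlonglongrightarrow> 0"
    using main_lim[of 1 \<epsilon> "\<lambda>t j. lam j"] assms(8,11) lamb by simp
  define c where "c t j \<omega> = lam j \<omega> * (\<Sum>i=1..j. a i \<omega>) / real t" for t j \<omega>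
  have cm: "c t j \<in> borel_measurable (past_sigma M Xs j)" if "1 \<le> j" "j \<le> t" for t j
    unfolding c_def
    by (intro borel_measurable_divide borel_measurable_times borel_measurable_sum assms(8) that
          past_meas_mono[OF _ assms(7)] borel_measurable_const) auto
  have cb: "\<bar>c t j \<omega>\<bar> \<le> R0" if "1 \<le> j" "j \<le> t" "\<omega> \<in> space M" for t j \<omega>
  proof -
    have "\<bar>\<Sum>i=1..j. a i \<omega>\<bar> \<le> real j * R0" by (rule sum_bdd) (use ab that in auto)
    also have "\<dots> \<le> real t * R0" using that assms(6) by (intro mult_right_mono) auto
    finally have "\<bar>\<Sum>i=1..j. a i \<omega>\<bar> / real t \<le> R0" using that by (simp add: field_simps)
    then show ?thesis unfolding c_def using lamb[of j \<omega>] that by (simp add: abs_mult abs_divide)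
  qed
  have eq: "(1 / (real t)\<^sup>2) * (\<Sum>i=1..t. a i \<omega> * (\<Sum>j=i..t. lam j \<omega> * Xs j \<omega>))
      = (1 / real t) * (\<Sum>j=1..t. c t j \<omega> * Xs j \<omega>)" for t \<omega>
  proof -
    have "(\<Sum>j=1..t. c t j \<omega> * Xs j \<omega>) = (\<Sum>j=1..t. lam j \<omega> * Xs j \<omega> * (\<Sum>i=1..j. a i \<omega>)) / real t"
      unfolding c_def sum_divide_distrib by (intro sum.cong) (auto simp: algebra_simps)
    then show ?thesis unfolding swap_sum by (simp add: power2_eq_square)
  qed
  have P2: "(\<lambda>t::nat. measure M {\<omega> \<in> space M.
             \<bar>(1 / (real t)\<^sup>2) * (\<Sum>i=1..t. a i \<omega> * (\<Sum>j=i..t. lam j \<omega> * Xs j \<omega>))\<bar> > \<epsilon>}) \<longlonglongrightarrow> 0"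
    unfolding eq by (rule main_lim[OF assms(6,11) cm cb])
  show ?thesis using P1 P2 by blast
qed

end
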